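(* Let $\nu\ge0$, $p_{0x}=-2\cosh(2\pi\nu)$, $\theta_\infty\in\mathbb C$, and suppose $$3p_{0x}^2+p_{0x}^3-12p_{0x}\big(1+\cos(\pi\theta_\infty)\big)+4\cos^2(\pi\theta_\infty)+16\cos(\pi\theta_\infty)+8=0$$ with $(\cos\pi\theta_\infty,p_{0x})$ on the portion of this curve between $(-1,-2)$ and $(1,-7)$, i.e. $\cos(\pi\theta_\infty)\in[-1,1]$. Then $\theta_\infty$ is real and $0\le\nu\le\frac2\pi\ln\mathbf G$, where $\mathbf G=\frac{1+\sqrt5}2$ is the golden ratio. Moreover, with $$c_1(\nu)=2+3\cosh(2\pi\nu)-\cosh(3\pi\nu)-3\cosh(\pi\nu),$$ $$c_2(\nu)=96\cosh(\pi\nu)+52\cosh(3\pi\nu)+12\cosh(5\pi\nu)-50-78\cosh(2\pi\nu)-30\cosh(4\pi\nu)-2\cosh(6\pi\nu),$$ one has $c_2(\nu)\ge0$, $\big|c_1(\nu)-\frac i2\sqrt{c_2(\nu)}\big|=1$ (positive square root), and $$\theta_\infty=\pm\frac1\pi\arg\Big(c_1(\nu)-\frac i2\sqrt{c_2(\nu)}\Big)+2m+1\quad\text{for some sign and some }m\in\mathbb Z,$$ where the argument is chosen with $-\pi\le\arg\big(c_1(\nu)-\frac i2\sqrt{c_2(\nu)}\big)\le0$.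
   Context: This is the cubic relation among the monodromy data $p_{0x}=p_{x1}=p_{01}$ and $p_\infty=2\cos(\pi\theta_\infty)$, $\theta_\infty=2\mu$, of the Fuchsian system associated with the Painlevé VI equation $PVI_\mu$, specialized to $p_{0x}=p_{x1}=p_{01}$; the portion between $(\cos\pi\theta_\infty,p_{0x})=(-1,-2)$ and $(1,-7)$ is the part of the branch with $p_{0x}\le-2$ and $-1\le\cos\pi\theta_\infty\le1$. *)

theory Defs
  imports "HOL-Analysis.Analysis"
begin

definition golden_ratio :: real where
  "golden_ratio = (1 + sqrt 5) / 2"

definition c1 :: "real \<Rightarrow> real" where
  "c1 \<nu> = 2 + 3 * cosh (2*pi*\<nu>) - cosh (3*pi*\<nu>) - 3 * cosh (pi*\<nu>)"

definition c2 :: "real \<Rightarrow> real" where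
  "c2 \<nu> = 96 * cosh (pi*\<nu>) + 52 * cosh (3*pi*\<nu>) + 12 * cosh (5*pi*\<nu>) - 50
           - 78 * cosh (2*pi*\<nu>) - 30 * cosh (4*pi*\<nu>) - 2 * cosh (6*pi*\<nu>)"

end

theory Submission
  imports Defs
begin

lemma coshk: "cosh (real k * t) = (exp t ^ k + inverse (exp t) ^ k) / 2"
  by (simp add: cosh_def exp_of_nat_mult exp_minus power_inverse)
lemma c_ids:
  fixes \<nu> :: real
  defines "u \<equiv> cosh (pi*\<nu>)"
  shows "c1 \<nu> = -1 + 6*u^2 - 4*u^3" "c2 \<nu> = 4*(1 - (c1 \<nu>)^2)" "cosh (2*pi*\<nu>) = 2*u^2 - 1"
proof -
  define x where "x = exp (pi*\<nu>)"
  have x0: "x \<noteq> 0" by (simp add: x_def)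
  have h: "cosh (of_nat k * (pi*\<nu>)) = (x ^ k + inverse x ^ k) / 2" for k
    unfolding x_def by (rule coshk)
  have h1: "cosh (pi*\<nu>) = (x + inverse x)/2" using h[of 1] by simp
  have hk: "cosh (numeral k*pi*\<nu>) = (x ^ numeral k + inverse x ^ numeral k) / 2" for k
    using h[of "numeral k"] by (simp add: mult.assoc)
  show "c1 \<nu> = -1 + 6*u^2 - 4*u^3" unfolding c1_def u_def hk h1
    using x0 by (simp add: field_simps power_inverse) algebra
  show "c2 \<nu> = 4*(1 - (c1 \<nu>)^2)" unfolding c2_def c1_def hk h1
    using x0 by (simp add: field_simps power_inverse) algebra
  show "cosh (2*pi*\<nu>) = 2*u^2 - 1" unfolding u_def hk h1
    using x0 by (simp add: field_simps power_inverse) algebra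
qed

lemma theta_real:
  fixes \<theta> :: complex
  assumes "cos (of_real pi * \<theta>) \<in> \<real>" "-1 \<le> Re (cos (of_real pi * \<theta>))" "Re (cos (of_real pi * \<theta>)) \<le> 1"
  shows "Im \<theta> = 0"
proof -
  define x where "x = pi * Re \<theta>"
  define y where "y = pi * Im \<theta>"
  have re: "Re (cos (of_real pi * \<theta>)) = cos x * cosh y"
    by (simp add: Re_cos x_def y_def cosh_def)
  have "Im (cos (of_real pi * \<theta>)) = 0" using assms(1) by (simp add: complex_is_Real_iff)
  hence im: "sin x * (exp (-y) - exp y) = 0" by (simp add: Im_cos x_def y_def)
  show ?thesis
  proof (rule ccontr)
    assume "Im \<theta> \<noteq> 0"
    hence y0: "y \<noteq> 0" by (simp add: y_def)
    have "exp (-y) \<noteq> exp y" using y0 by simp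
    hence "sin x = 0" using im by simp
    hence "(cos x)^2 = 1" using sin_cos_squared_add[of x] by simp
    hence "\<bar>cos x\<bar> = 1" by (auto simp: power2_eq_1_iff)
    moreover have "cosh y > 1"
    proof -
      have "cosh 0 < cosh \<bar>y\<bar>" using y0 cosh_real_nonneg_le_iff[of "\<bar>y\<bar>" 0] by (auto simp: not_le)
      thus ?thesis by simp
    qed
    ultimately have "\<bar>cos x * cosh y\<bar> > 1" by (simp add: abs_mult)
    thus False using assms(2,3) re by linarith
  qed
qed

theorem lemma2:
  fixes \<nu> p0x :: real and \<theta> :: complex
  assumes "\<nu> \<ge> 0"
    and "p0x = - 2 * cosh (2*pi*\<nu>)"
    and "3 * (of_real p0x)^2 + (of_real p0x)^3 - 12 * of_real p0x * (1 + cos (of_real pi * \<theta>))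
         + 4 * (cos (of_real pi * \<theta>))^2 + 16 * cos (of_real pi * \<theta>) + 8 = (0::complex)"
    and "cos (of_real pi * \<theta>) \<in> \<real>"
    and "-1 \<le> Re (cos (of_real pi * \<theta>))" and "Re (cos (of_real pi * \<theta>)) \<le> 1"
  shows "\<theta> \<in> \<real>
    \<and> 0 \<le> \<nu> \<and> \<nu> \<le> 2 / pi * ln golden_ratio
    \<and> c2 \<nu> \<ge> 0
    \<and> cmod (complex_of_real (c1 \<nu>) - \<i> / 2 * complex_of_real (sqrt (c2 \<nu>))) = 1
    \<and> (\<forall>a. -pi \<le> a \<and> a \<le> 0 \<and>
          complex_of_real (c1 \<nu>) - \<i> / 2 * complex_of_real (sqrt (c2 \<nu>)) = cis a \<longrightarrow>
          (\<exists>s \<in> {-1, 1::real}. \<exists>m::int. \<theta> = complex_of_real (s * a / pi + 2 * of_int m + 1)))"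
proof -
  have im0: "Im \<theta> = 0" using theta_real assms(4-6) by blast
  define r where "r = Re \<theta>"
  have th: "\<theta> = of_real r" using im0 by (simp add: r_def complex_eq_iff)
  define C where "C = cos (pi * r)"
  have cosC: "cos (of_real pi * \<theta>) = of_real C"
    by (simp add: th C_def flip: cos_of_real)
  have C1: "-1 \<le> C" "C \<le> 1" using assms(5,6) by (simp_all add: cosC)
  have "complex_of_real (3 * p0x^2 + p0x^3 - 12 * p0x * (1 + C) + 4 * C^2 + 16 * C + 8) = 0"
    using assms(3) unfolding cosC by simp
  hence eq: "3 * p0x^2 + p0x^3 - 12 * p0x * (1 + C) + 4 * C^2 + 16 * C + 8 = 0"
    by (simp only: of_real_eq_0_iff)
  define u where "u = cosh (pi*\<nu>)"
  have ids: "c1 \<nu> = -1 + 6*u^2 - 4*u^3" "c2 \<nu> = 4*(1 - (c1 \<nu>)^2)" "cosh (2*pi*\<nu>) = 2*u^2 - 1"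
    using c_ids unfolding u_def by blast+
  have p: "p0x = 2 - 4*u^2" using assms(2) ids(3) by simp
  have u1: "u \<ge> 1" unfolding u_def by (rule cosh_real_ge_1)
  have fac: "4 * (C - (1-6*u^2+4*u^3)) * (C - (1-6*u^2-4*u^3)) = 0"
    using eq unfolding p by (simp add: algebra_simps power2_eq_square power3_eq_cube)
  have "C - (1-6*u^2-4*u^3) > 0"
  proof -
    have "u^2 \<ge> 1" "u^3 \<ge> 1" using u1 by (simp_all add: one_le_power)
    thus ?thesis using C1 by linarith
  qed
  hence Cu: "C = 1-6*u^2+4*u^3" using fac by simp
  have u32: "u \<le> 3/2"
  proof (rule ccontr)
    assume "\<not> u \<le> 3/2"
    hence "u^2 * (4*u - 6) > 0" using u1 by simp
    thus False using C1 Cu by (simp add: algebra_simps power2_eq_square power3_eq_cube)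
  qed
  have c1C: "c1 \<nu> = - C" using ids(1) Cu by simp
  have c2ge: "c2 \<nu> \<ge> 0"
  proof -
    have "C^2 \<le> 1" using C1 by (simp add: abs_square_le_1)
    thus ?thesis using ids(2) c1C by simp
  qed
  have cm: "cmod (complex_of_real (c1 \<nu>) - \<i> / 2 * complex_of_real (sqrt (c2 \<nu>))) = 1"
  proof -
    have "complex_of_real (c1 \<nu>) - \<i> / 2 * complex_of_real (sqrt (c2 \<nu>)) = Complex (c1 \<nu>) (- sqrt (c2 \<nu>) / 2)"
      by (simp add: complex_eq_iff)
    moreover have "(c1 \<nu>)^2 + (- sqrt (c2 \<nu>) / 2)^2 = 1"
      using c2ge ids(2) by (simp add: power_divide field_simps)
    ultimately show ?thesis by (simp add: cmod_def)
  qed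
  have nub: "\<nu> \<le> 2 / pi * ln golden_ratio"
  proof -
    define G where "G = golden_ratio"
    have G1: "G \<ge> 1" unfolding G_def golden_ratio_def by (simp add: real_le_rsqrt)
    have G2: "G^2 = (3 + sqrt 5)/2" unfolding G_def golden_ratio_def by (simp add: power2_eq_square field_simps)
    have G2i: "inverse (G^2) = (3 - sqrt 5)/2"
    proof -
      have "G^2 * ((3 - sqrt 5)/2) = 1" unfolding G2 by (simp add: field_simps algebra_simps)
      thus ?thesis by (rule inverse_unique)
    qed
    have "cosh (2 * ln G) = 3/2"
    proof -
      have "exp (2 * ln G) = G^2" using G1 by (simp add: exp_of_nat_mult[of 2, simplified] power2_eq_square)
      hence "cosh (2 * ln G) = (G^2 + inverse (G^2))/2" by (simp add: cosh_def exp_minus)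
      also have "\<dots> = 3/2" unfolding G2i unfolding G2 by (simp add: field_simps)
      finally show ?thesis .
    qed
    hence "cosh (pi*\<nu>) \<le> cosh (2 * ln G)" using u32 u_def by simp
    hence "pi*\<nu> \<le> 2 * ln G" using cosh_real_nonneg_le_iff assms(1) G1 by simp
    thus ?thesis unfolding G_def by (simp add: field_simps)
  qed
  have last: "\<exists>s \<in> {-1, 1::real}. \<exists>m::int. \<theta> = complex_of_real (s * a / pi + 2 * of_int m + 1)"
    if a: "complex_of_real (c1 \<nu>) - \<i> / 2 * complex_of_real (sqrt (c2 \<nu>)) = cis a" for a
  proof -
    have "cos a = c1 \<nu>" using arg_cong[OF a, of Re] by simp
    hence ca: "cos (pi * r) = cos (a + pi)" using c1C C_def by simp
    hence "(sin (pi*r))^2 = (sin (a+pi))^2" by (simp only: sin_squared_eq ca)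
    hence "sin (pi*r) = sin (a+pi) \<or> sin (pi*r) = sin (-(a+pi))" by (auto simp: power2_eq_iff)
    thus ?thesis
    proof
      assume "sin (pi*r) = sin (a+pi)"
      then obtain n :: int where "pi*r = a + pi + 2*pi*n" using sin_cos_eq_iff ca by blast
      hence "r = 1 * a / pi + 2 * of_int n + 1" by (simp add: field_simps)
      thus ?thesis using th by blast
    next
      assume "sin (pi*r) = sin (-(a+pi))"
      moreover have "cos (pi*r) = cos (-(a+pi))" using ca by simp
      ultimately obtain n :: int where "pi*r = -(a + pi) + 2*pi*n" using sin_cos_eq_iff by blast
      hence "r = (-1) * a / pi + 2 * of_int (n-1) + 1" by (simp add: field_simps)
      thus ?thesis using th by blast
    qed
  qed
  show ?thesis using th assms(1) nub c2ge cm last by auto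
qed

end
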